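(* Let $G$ be a graph with no induced $P_7$, $C_4$, $C_6$ or $C_7$ and let $H=(B_1,\dots,B_5)$ be a nice blowup of $C_5$ in $G$. Then $G[A_3(i)]$ contains no induced path on four vertices, for each $i\in\{1,\dots,5\}$.
   Context: Indices modulo $5$. A nice blowup of $C_5$ is a tuple $(B_1,\dots,B_5)$ of pairwise disjoint cliques such that every vertex of $B_j$ has a neighbor in $B_{j-1}$ and in $B_{j+1}$, $B_j$ is anticomplete to $B_{j+2}$, and there are no $a\in B_j$, distinct $b,c\in B_{j+1}$, $d\in B_{j+2}$ with $G[\{a,b,c,d\}]\cong P_4$; $V(H)=\bigcup B_j$. For $v\notin V(H)$, $\operatorname{supp}(v)$ is the set of $j$ such that $v$ has a neighbor in $B_j$; $A_3(i)=\{v\notin V(H):\operatorname{supp}(v)=\{i-1,i,i+1\}\}$. *)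

theory Defs
  imports Main
begin

definition simple_graph :: "'a set \<Rightarrow> ('a \<Rightarrow> 'a \<Rightarrow> bool) \<Rightarrow> bool" where
  "simple_graph V E \<longleftrightarrow> finite V \<and> (\<forall>x y. E x y \<longrightarrow> E y x) \<and> (\<forall>x. \<not> E x x)"

definition has_induced_path :: "'a set \<Rightarrow> ('a \<Rightarrow> 'a \<Rightarrow> bool) \<Rightarrow> nat \<Rightarrow> bool" where
  "has_induced_path S E n \<longleftrightarrow> (\<exists>f. inj_on f {..<n} \<and> f ` {..<n} \<subseteq> S \<and>
     (\<forall>i<n. \<forall>j<n. E (f i) (f j) \<longleftrightarrow> (i = Suc j \<or> j = Suc i)))"

definition has_induced_cycle :: "'a set \<Rightarrow> ('a \<Rightarrow> 'a \<Rightarrow> bool) \<Rightarrow> nat \<Rightarrow> bool" where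
  "has_induced_cycle S E n \<longleftrightarrow> (\<exists>f. inj_on f {..<n} \<and> f ` {..<n} \<subseteq> S \<and>
     (\<forall>i<n. \<forall>j<n. E (f i) (f j) \<longleftrightarrow> (i = Suc j mod n \<or> j = Suc i mod n)))"

text \<open>Nice blowup of C5, blocks indexed by 0..4 (indices mod 5).\<close>
definition nice_blowup_C5 :: "'a set \<Rightarrow> ('a \<Rightarrow> 'a \<Rightarrow> bool) \<Rightarrow> (nat \<Rightarrow> 'a set) \<Rightarrow> bool" where
  "nice_blowup_C5 V E B \<longleftrightarrow>
     (\<forall>j<5. B j \<subseteq> V) \<and>
     (\<forall>j<5. \<forall>k<5. j \<noteq> k \<longrightarrow> B j \<inter> B k = {}) \<and>
     (\<forall>j<5. \<forall>x\<in>B j. \<forall>y\<in>B j. x \<noteq> y \<longrightarrow> E x y) \<and>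
     (\<forall>j<5. \<forall>x\<in>B j. (\<exists>y\<in>B ((j + 4) mod 5). E x y) \<and> (\<exists>y\<in>B ((j + 1) mod 5). E x y)) \<and>
     (\<forall>j<5. \<forall>x\<in>B j. \<forall>y\<in>B ((j + 2) mod 5). \<not> E x y) \<and>
     (\<forall>j<5. \<not> (\<exists>a\<in>B j. \<exists>b\<in>B ((j + 1) mod 5). \<exists>c\<in>B ((j + 1) mod 5). \<exists>d\<in>B ((j + 2) mod 5).
          b \<noteq> c \<and> has_induced_path {a, b, c, d} E 4))"

definition blowup_vertices :: "(nat \<Rightarrow> 'a set) \<Rightarrow> 'a set" where
  "blowup_vertices B = (\<Union>j<5. B j)"

definition supp :: "('a \<Rightarrow> 'a \<Rightarrow> bool) \<Rightarrow> (nat \<Rightarrow> 'a set) \<Rightarrow> 'a \<Rightarrow> nat set" where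
  "supp E B v = {j. j < 5 \<and> (\<exists>u\<in>B j. E v u)}"

definition A3 :: "'a set \<Rightarrow> ('a \<Rightarrow> 'a \<Rightarrow> bool) \<Rightarrow> (nat \<Rightarrow> 'a set) \<Rightarrow> nat \<Rightarrow> 'a set" where
  "A3 V E B i = {v \<in> V - blowup_vertices B. supp E B v = {(i + 4) mod 5, i, (i + 1) mod 5}}"

end

theory Submission
  imports Defs
begin
lemma all4: "(\<forall>i<(4::nat). P i) \<longleftrightarrow> P 0 \<and> P 1 \<and> P 2 \<and> P 3"
  by (simp add: All_less_Suc eval_nat_numeral conj_ac)
lemma all6: "(\<forall>i<(6::nat). P i) \<longleftrightarrow> P 0 \<and> P 1 \<and> P 2 \<and> P 3 \<and> P 4 \<and> P 5"
  by (simp add: All_less_Suc eval_nat_numeral conj_ac)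
lemma C4_of:
  assumes G: "simple_graph V E" and nC: "\<not> has_induced_cycle V E 4"
    and m: "v0 \<in> V" "v1 \<in> V" "v2 \<in> V" "v3 \<in> V"
    and d: "v0 \<noteq> v2" "v1 \<noteq> v3"
    and e: "E v0 v1" "E v1 v2" "E v2 v3" "E v3 v0"
      "\<not> E v0 v2" "\<not> E v1 v3"
  shows False
proof -
  from G have sy: "\<And>x y. E x y \<Longrightarrow> E y x" and irr: "\<And>x. \<not> E x x" unfolding simple_graph_def by blast+
  have r0: "E v1 v0" by (rule sy[OF e(1)])
  have r1: "E v2 v1" by (rule sy[OF e(2)])
  have r2: "E v3 v2" by (rule sy[OF e(3)])
  have r3: "E v0 v3" by (rule sy[OF e(4)])
  have r4: "\<not> E v2 v0" using e(5) sy[of v2 v0] by blast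
  have r5: "\<not> E v3 v1" using e(6) sy[of v3 v1] by blast
  let ?f = "\<lambda>n. [v0,v1,v2,v3] ! n"
  have d0_1: "v0 \<noteq> v1" using e irr by metis
  have d0_2: "v0 \<noteq> v2" using d by blast
  have d0_3: "v0 \<noteq> v3" using e irr by metis
  have d1_2: "v1 \<noteq> v2" using e irr by metis
  have d1_3: "v1 \<noteq> v3" using d by blast
  have d2_3: "v2 \<noteq> v3" using e irr by metis
  have ds: "distinct [v0,v1,v2,v3]" using d0_1 d0_2 d0_3 d1_2 d1_3 d2_3 by simp
  have h1: "inj_on ?f {..<4}" unfolding inj_on_def Ball_def lessThan_iff all4 using d0_1 d0_2 d0_3 d1_2 d1_3 d2_3 d0_1[THEN not_sym] d0_2[THEN not_sym] d0_3[THEN not_sym] d1_2[THEN not_sym] d1_3[THEN not_sym] d2_3[THEN not_sym] by simp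
  have h2: "?f ` {..<4} \<subseteq> V" unfolding image_subset_iff Ball_def lessThan_iff all4 using m by simp
  have h3: "\<forall>i<4. \<forall>j<4. E (?f i) (?f j) \<longleftrightarrow> (i = Suc j mod 4 \<or> j = Suc i mod 4)"
    unfolding all4 using e r0 r1 r2 r3 r4 r5 irr by simp
  have "\<not> (inj_on ?f {..<4} \<and> ?f ` {..<4} \<subseteq> V \<and> (\<forall>i<4. \<forall>j<4. E (?f i) (?f j) \<longleftrightarrow> (i = Suc j mod 4 \<or> j = Suc i mod 4)))"
    using nC[unfolded has_induced_cycle_def not_ex, THEN spec[where x="?f"]] .
  then show False using conjI[OF h1 conjI[OF h2 h3]] by contradiction
qed
lemma C6_of:
  assumes G: "simple_graph V E" and nC: "\<not> has_induced_cycle V E 6"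
    and m: "v0 \<in> V" "v1 \<in> V" "v2 \<in> V" "v3 \<in> V" "v4 \<in> V" "v5 \<in> V"
    and e: "E v0 v1" "E v1 v2" "E v2 v3" "E v3 v4" "E v4 v5" "E v5 v0"
      "\<not> E v0 v2" "\<not> E v0 v3" "\<not> E v0 v4" "\<not> E v1 v3" "\<not> E v1 v4" "\<not> E v1 v5" "\<not> E v2 v4" "\<not> E v2 v5" "\<not> E v3 v5"
  shows False
proof -
  from G have sy: "\<And>x y. E x y \<Longrightarrow> E y x" and irr: "\<And>x. \<not> E x x" unfolding simple_graph_def by blast+
  have r0: "E v1 v0" by (rule sy[OF e(1)])
  have r1: "E v2 v1" by (rule sy[OF e(2)])
  have r2: "E v3 v2" by (rule sy[OF e(3)])
  have r3: "E v4 v3" by (rule sy[OF e(4)])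
  have r4: "E v5 v4" by (rule sy[OF e(5)])
  have r5: "E v0 v5" by (rule sy[OF e(6)])
  have r6: "\<not> E v2 v0" using e(7) sy[of v2 v0] by blast
  have r7: "\<not> E v3 v0" using e(8) sy[of v3 v0] by blast
  have r8: "\<not> E v4 v0" using e(9) sy[of v4 v0] by blast
  have r9: "\<not> E v3 v1" using e(10) sy[of v3 v1] by blast
  have r10: "\<not> E v4 v1" using e(11) sy[of v4 v1] by blast
  have r11: "\<not> E v5 v1" using e(12) sy[of v5 v1] by blast
  have r12: "\<not> E v4 v2" using e(13) sy[of v4 v2] by blast
  have r13: "\<not> E v5 v2" using e(14) sy[of v5 v2] by blast
  have r14: "\<not> E v5 v3" using e(15) sy[of v5 v3] by blast
  let ?f = "\<lambda>n. [v0,v1,v2,v3,v4,v5] ! n"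
  have d0_1: "v0 \<noteq> v1" using e irr by metis
  have d0_2: "v0 \<noteq> v2" proof assume "v0 = v2" with e r0 r1 r2 r3 r4 r5 r6 r7 r8 r9 r10 r11 r12 r13 r14 show False by simp qed
  have d0_3: "v0 \<noteq> v3" proof assume "v0 = v3" with e r0 r1 r2 r3 r4 r5 r6 r7 r8 r9 r10 r11 r12 r13 r14 show False by simp qed
  have d0_4: "v0 \<noteq> v4" proof assume "v0 = v4" with e r0 r1 r2 r3 r4 r5 r6 r7 r8 r9 r10 r11 r12 r13 r14 show False by simp qed
  have d0_5: "v0 \<noteq> v5" using e irr by metis
  have d1_2: "v1 \<noteq> v2" using e irr by metis
  have d1_3: "v1 \<noteq> v3" proof assume "v1 = v3" with e r0 r1 r2 r3 r4 r5 r6 r7 r8 r9 r10 r11 r12 r13 r14 show False by simp qed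
  have d1_4: "v1 \<noteq> v4" proof assume "v1 = v4" with e r0 r1 r2 r3 r4 r5 r6 r7 r8 r9 r10 r11 r12 r13 r14 show False by simp qed
  have d1_5: "v1 \<noteq> v5" proof assume "v1 = v5" with e r0 r1 r2 r3 r4 r5 r6 r7 r8 r9 r10 r11 r12 r13 r14 show False by simp qed
  have d2_3: "v2 \<noteq> v3" using e irr by metis
  have d2_4: "v2 \<noteq> v4" proof assume "v2 = v4" with e r0 r1 r2 r3 r4 r5 r6 r7 r8 r9 r10 r11 r12 r13 r14 show False by simp qed
  have d2_5: "v2 \<noteq> v5" proof assume "v2 = v5" with e r0 r1 r2 r3 r4 r5 r6 r7 r8 r9 r10 r11 r12 r13 r14 show False by simp qed
  have d3_4: "v3 \<noteq> v4" using e irr by metis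
  have d3_5: "v3 \<noteq> v5" proof assume "v3 = v5" with e r0 r1 r2 r3 r4 r5 r6 r7 r8 r9 r10 r11 r12 r13 r14 show False by simp qed
  have d4_5: "v4 \<noteq> v5" using e irr by metis
  have ds: "distinct [v0,v1,v2,v3,v4,v5]" using d0_1 d0_2 d0_3 d0_4 d0_5 d1_2 d1_3 d1_4 d1_5 d2_3 d2_4 d2_5 d3_4 d3_5 d4_5 by simp
  have h1: "inj_on ?f {..<6}" unfolding inj_on_def Ball_def lessThan_iff all6 using d0_1 d0_2 d0_3 d0_4 d0_5 d1_2 d1_3 d1_4 d1_5 d2_3 d2_4 d2_5 d3_4 d3_5 d4_5 d0_1[THEN not_sym] d0_2[THEN not_sym] d0_3[THEN not_sym] d0_4[THEN not_sym] d0_5[THEN not_sym] d1_2[THEN not_sym] d1_3[THEN not_sym] d1_4[THEN not_sym] d1_5[THEN not_sym] d2_3[THEN not_sym] d2_4[THEN not_sym] d2_5[THEN not_sym] d3_4[THEN not_sym] d3_5[THEN not_sym] d4_5[THEN not_sym] by simp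
  have h2: "?f ` {..<6} \<subseteq> V" unfolding image_subset_iff Ball_def lessThan_iff all6 using m by simp
  have h3: "\<forall>i<6. \<forall>j<6. E (?f i) (?f j) \<longleftrightarrow> (i = Suc j mod 6 \<or> j = Suc i mod 6)"
    unfolding all6 using e r0 r1 r2 r3 r4 r5 r6 r7 r8 r9 r10 r11 r12 r13 r14 irr by simp
  have "\<not> (inj_on ?f {..<6} \<and> ?f ` {..<6} \<subseteq> V \<and> (\<forall>i<6. \<forall>j<6. E (?f i) (?f j) \<longleftrightarrow> (i = Suc j mod 6 \<or> j = Suc i mod 6)))"
    using nC[unfolded has_induced_cycle_def not_ex, THEN spec[where x="?f"]] .
  then show False using conjI[OF h1 conjI[OF h2 h3]] by contradiction
qed
lemma core:
  assumes G: "simple_graph V E" and n4: "\<not> has_induced_cycle V E 4" and n6: "\<not> has_induced_cycle V E 6"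
    and XV: "X \<subseteq> V" and WV: "W \<subseteq> V"
    and cX: "\<forall>x\<in>X. \<forall>y\<in>X. x \<noteq> y \<longrightarrow> E x y" and cW: "\<forall>x\<in>W. \<forall>y\<in>W. x \<noteq> y \<longrightarrow> E x y"
    and XW: "\<forall>x\<in>X. \<forall>y\<in>W. \<not> E x y" and XWd: "X \<inter> W = {}"
    and PV: "a \<in> V" "b \<in> V" "c \<in> V" "d \<in> V"
    and PX: "a \<notin> X" "b \<notin> X" "c \<notin> X" "d \<notin> X" and PW: "a \<notin> W" "b \<notin> W" "c \<notin> W" "d \<notin> W"
    and pd: "a \<noteq> b" "a \<noteq> c" "a \<noteq> d" "b \<noteq> c" "b \<noteq> d" "c \<noteq> d"
    and pe: "E a b" "E b c" "E c d" "\<not> E a c" "\<not> E a d" "\<not> E b d"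
    and nX: "\<exists>x\<in>X. E a x" "\<exists>x\<in>X. E b x" "\<exists>x\<in>X. E c x" "\<exists>x\<in>X. E d x"
    and nW: "\<exists>x\<in>W. E a x" "\<exists>x\<in>W. E b x" "\<exists>x\<in>W. E c x" "\<exists>x\<in>W. E d x"
  shows False
proof -
  from G have sy: "\<And>x y. E x y \<Longrightarrow> E y x" unfolding simple_graph_def by blast
  obtain xa where xa: "xa \<in> X" "E a xa" using nX(1) by blast
  obtain wa where wa: "wa \<in> W" "E a wa" using nW(1) by blast
  obtain xb where xb: "xb \<in> X" "E b xb" using nX(2) by blast
  obtain wb where wb: "wb \<in> W" "E b wb" using nW(2) by blast
  obtain xc where xc: "xc \<in> X" "E c xc" using nX(3) by blast
  obtain wc where wc: "wc \<in> W" "E c wc" using nW(3) by blast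
  obtain xd where xd: "xd \<in> X" "E d xd" using nX(4) by blast
  obtain wd where wd: "wd \<in> W" "E d wd" using nW(4) by blast
  have mem: "a \<in> V" "b \<in> V" "c \<in> V" "d \<in> V" "wa \<in> V" "xa \<in> V" "wb \<in> V" "xb \<in> V" "wc \<in> V" "xc \<in> V" "wd \<in> V" "xd \<in> V" using PV XV WV xa wa xb wb xc wc xd wd by blast+
  have "a \<noteq> c" "wa \<noteq> xa" using PX PW pd XWd xa wa xb wb xc wc xd wd by blast+
  note dd = this
  have cl0: "\<not> (E a wa \<and> E wa c \<and> E c xa \<and> E xa a \<and> \<not> E a c \<and> \<not> E wa xa)" using C4_of[OF G n4 mem(1) mem(5) mem(3) mem(6) dd] by blast
  have "a \<noteq> d" "wa \<noteq> xa" using PX PW pd XWd xa wa xb wb xc wc xd wd by blast+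
  note dd = this
  have cl1: "\<not> (E a wa \<and> E wa d \<and> E d xa \<and> E xa a \<and> \<not> E a d \<and> \<not> E wa xa)" using C4_of[OF G n4 mem(1) mem(5) mem(4) mem(6) dd] by blast
  have "a \<noteq> c" "wa \<noteq> xb" using PX PW pd XWd xa wa xb wb xc wc xd wd by blast+
  note dd = this
  have cl2: "\<not> (E a wa \<and> E wa c \<and> E c xb \<and> E xb a \<and> \<not> E a c \<and> \<not> E wa xb)" using C4_of[OF G n4 mem(1) mem(5) mem(3) mem(8) dd] by blast
  have "a \<noteq> c" "xa \<noteq> wb" using PX PW pd XWd xa wa xb wb xc wc xd wd by blast+
  note dd = this
  have cl3: "\<not> (E a xa \<and> E xa c \<and> E c wb \<and> E wb a \<and> \<not> E a c \<and> \<not> E xa wb)" using C4_of[OF G n4 mem(1) mem(6) mem(3) mem(7) dd] by blast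
  have "a \<noteq> c" "xa \<noteq> wc" using PX PW pd XWd xa wa xb wb xc wc xd wd by blast+
  note dd = this
  have cl4: "\<not> (E a xa \<and> E xa c \<and> E c wc \<and> E wc a \<and> \<not> E a c \<and> \<not> E xa wc)" using C4_of[OF G n4 mem(1) mem(6) mem(3) mem(9) dd] by blast
  have "b \<noteq> d" "xa \<noteq> wc" using PX PW pd XWd xa wa xb wb xc wc xd wd by blast+
  note dd = this
  have cl5: "\<not> (E b xa \<and> E xa d \<and> E d wc \<and> E wc b \<and> \<not> E b d \<and> \<not> E xa wc)" using C4_of[OF G n4 mem(2) mem(6) mem(4) mem(9) dd] by blast
  have "b \<noteq> wc" "c \<noteq> wa" using PX PW pd XWd xa wa xb wb xc wc xd wd by blast+
  note dd = this
  have cl6: "\<not> (E b c \<and> E c wc \<and> E wc wa \<and> E wa b \<and> \<not> E b wc \<and> \<not> E c wa)" using C4_of[OF G n4 mem(2) mem(3) mem(9) mem(5) dd] by blast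
  have "a \<noteq> wb" "b \<noteq> wa" using PX PW pd XWd xa wa xb wb xc wc xd wd by blast+
  note dd = this
  have cl7: "\<not> (E a b \<and> E b wb \<and> E wb wa \<and> E wa a \<and> \<not> E a wb \<and> \<not> E b wa)" using C4_of[OF G n4 mem(1) mem(2) mem(7) mem(5) dd] by blast
  have "a \<noteq> c" "xa \<noteq> wd" using PX PW pd XWd xa wa xb wb xc wc xd wd by blast+
  note dd = this
  have cl8: "\<not> (E a xa \<and> E xa c \<and> E c wd \<and> E wd a \<and> \<not> E a c \<and> \<not> E xa wd)" using C4_of[OF G n4 mem(1) mem(6) mem(3) mem(11) dd] by blast
  have "b \<noteq> wd" "c \<noteq> wa" using PX PW pd XWd xa wa xb wb xc wc xd wd by blast+
  note dd = this
  have cl9: "\<not> (E b c \<and> E c wd \<and> E wd wa \<and> E wa b \<and> \<not> E b wd \<and> \<not> E c wa)" using C4_of[OF G n4 mem(2) mem(3) mem(11) mem(5) dd] by blast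
  have "b \<noteq> d" "xa \<noteq> wd" using PX PW pd XWd xa wa xb wb xc wc xd wd by blast+
  note dd = this
  have cl10: "\<not> (E b xa \<and> E xa d \<and> E d wd \<and> E wd b \<and> \<not> E b d \<and> \<not> E xa wd)" using C4_of[OF G n4 mem(2) mem(6) mem(4) mem(11) dd] by blast
  have "c \<noteq> wd" "d \<noteq> wc" using PX PW pd XWd xa wa xb wb xc wc xd wd by blast+
  note dd = this
  have cl11: "\<not> (E c d \<and> E d wd \<and> E wd wc \<and> E wc c \<and> \<not> E c wd \<and> \<not> E d wc)" using C4_of[OF G n4 mem(3) mem(4) mem(11) mem(9) dd] by blast
  have "b \<noteq> d" "c \<noteq> xa" using PX PW pd XWd xa wa xb wb xc wc xd wd by blast+
  note dd = this
  have cl12: "\<not> (E b c \<and> E c d \<and> E d xa \<and> E xa b \<and> \<not> E b d \<and> \<not> E c xa)" using C4_of[OF G n4 mem(2) mem(3) mem(4) mem(6) dd] by blast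
  have "a \<noteq> c" "b \<noteq> wd" using PX PW pd XWd xa wa xb wb xc wc xd wd by blast+
  note dd = this
  have cl13: "\<not> (E a b \<and> E b c \<and> E c wd \<and> E wd a \<and> \<not> E a c \<and> \<not> E b wd)" using C4_of[OF G n4 mem(1) mem(2) mem(3) mem(11) dd] by blast
  have "a \<noteq> xb" "b \<noteq> xa" using PX PW pd XWd xa wa xb wb xc wc xd wd by blast+
  note dd = this
  have cl14: "\<not> (E a b \<and> E b xb \<and> E xb xa \<and> E xa a \<and> \<not> E a xb \<and> \<not> E b xa)" using C4_of[OF G n4 mem(1) mem(2) mem(8) mem(6) dd] by blast
  have "a \<noteq> c" "xb \<noteq> wc" using PX PW pd XWd xa wa xb wb xc wc xd wd by blast+
  note dd = this
  have cl15: "\<not> (E a xb \<and> E xb c \<and> E c wc \<and> E wc a \<and> \<not> E a c \<and> \<not> E xb wc)" using C4_of[OF G n4 mem(1) mem(8) mem(3) mem(9) dd] by blast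
  have "b \<noteq> d" "xc \<noteq> wd" using PX PW pd XWd xa wa xb wb xc wc xd wd by blast+
  note dd = this
  have cl16: "\<not> (E b xc \<and> E xc d \<and> E d wd \<and> E wd b \<and> \<not> E b d \<and> \<not> E xc wd)" using C4_of[OF G n4 mem(2) mem(10) mem(4) mem(11) dd] by blast
  have "a \<noteq> c" "b \<noteq> xa" using PX PW pd XWd xa wa xb wb xc wc xd wd by blast+
  note dd = this
  have cl17: "\<not> (E a b \<and> E b c \<and> E c xa \<and> E xa a \<and> \<not> E a c \<and> \<not> E b xa)" using C4_of[OF G n4 mem(1) mem(2) mem(3) mem(6) dd] by blast
  have "a \<noteq> c" "b \<noteq> xc" using PX PW pd XWd xa wa xb wb xc wc xd wd by blast+
  note dd = this
  have cl18: "\<not> (E a b \<and> E b c \<and> E c xc \<and> E xc a \<and> \<not> E a c \<and> \<not> E b xc)" using C4_of[OF G n4 mem(1) mem(2) mem(3) mem(10) dd] by blast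
  have cl19: "\<not> (E a wa \<and> E wa wc \<and> E wc c \<and> E c xc \<and> E xc xa \<and> E xa a \<and> \<not> E a wc \<and> \<not> E a c \<and> \<not> E a xc \<and> \<not> E wa c \<and> \<not> E wa xc \<and> \<not> E wa xa \<and> \<not> E wc xc \<and> \<not> E wc xa \<and> \<not> E c xa)" using C6_of[OF G n6 mem(1) mem(5) mem(9) mem(3) mem(10) mem(6)] by blast
  have "b \<noteq> d" "c \<noteq> wa" using PX PW pd XWd xa wa xb wb xc wc xd wd by blast+
  note dd = this
  have cl20: "\<not> (E b c \<and> E c d \<and> E d wa \<and> E wa b \<and> \<not> E b d \<and> \<not> E c wa)" using C4_of[OF G n4 mem(2) mem(3) mem(4) mem(5) dd] by blast
  have "b \<noteq> xc" "c \<noteq> xa" using PX PW pd XWd xa wa xb wb xc wc xd wd by blast+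
  note dd = this
  have cl21: "\<not> (E b c \<and> E c xc \<and> E xc xa \<and> E xa b \<and> \<not> E b xc \<and> \<not> E c xa)" using C4_of[OF G n4 mem(2) mem(3) mem(10) mem(6) dd] by blast
  have "b \<noteq> xc" "c \<noteq> xb" using PX PW pd XWd xa wa xb wb xc wc xd wd by blast+
  note dd = this
  have cl22: "\<not> (E b c \<and> E c xc \<and> E xc xb \<and> E xb b \<and> \<not> E b xc \<and> \<not> E c xb)" using C4_of[OF G n4 mem(2) mem(3) mem(10) mem(8) dd] by blast
  have "b \<noteq> d" "wc \<noteq> xc" using PX PW pd XWd xa wa xb wb xc wc xd wd by blast+
  note dd = this
  have cl23: "\<not> (E b wc \<and> E wc d \<and> E d xc \<and> E xc b \<and> \<not> E b d \<and> \<not> E wc xc)" using C4_of[OF G n4 mem(2) mem(9) mem(4) mem(10) dd] by blast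
  have "a \<noteq> c" "wa \<noteq> xc" using PX PW pd XWd xa wa xb wb xc wc xd wd by blast+
  note dd = this
  have cl24: "\<not> (E a wa \<and> E wa c \<and> E c xc \<and> E xc a \<and> \<not> E a c \<and> \<not> E wa xc)" using C4_of[OF G n4 mem(1) mem(5) mem(3) mem(10) dd] by blast
  have "b \<noteq> d" "c \<noteq> wb" using PX PW pd XWd xa wa xb wb xc wc xd wd by blast+
  note dd = this
  have cl25: "\<not> (E b c \<and> E c d \<and> E d wb \<and> E wb b \<and> \<not> E b d \<and> \<not> E c wb)" using C4_of[OF G n4 mem(2) mem(3) mem(4) mem(7) dd] by blast
  have "b \<noteq> d" "wa \<noteq> xc" using PX PW pd XWd xa wa xb wb xc wc xd wd by blast+
  note dd = this
  have cl26: "\<not> (E b wa \<and> E wa d \<and> E d xc \<and> E xc b \<and> \<not> E b d \<and> \<not> E wa xc)" using C4_of[OF G n4 mem(2) mem(5) mem(4) mem(10) dd] by blast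
  have "a \<noteq> xc" "b \<noteq> xa" using PX PW pd XWd xa wa xb wb xc wc xd wd by blast+
  note dd = this
  have cl27: "\<not> (E a b \<and> E b xc \<and> E xc xa \<and> E xa a \<and> \<not> E a xc \<and> \<not> E b xa)" using C4_of[OF G n4 mem(1) mem(2) mem(10) mem(6) dd] by blast
  have "a \<noteq> c" "wa \<noteq> xd" using PX PW pd XWd xa wa xb wb xc wc xd wd by blast+
  note dd = this
  have cl28: "\<not> (E a wa \<and> E wa c \<and> E c xd \<and> E xd a \<and> \<not> E a c \<and> \<not> E wa xd)" using C4_of[OF G n4 mem(1) mem(5) mem(3) mem(12) dd] by blast
  have "b \<noteq> d" "c \<noteq> xd" using PX PW pd XWd xa wa xb wb xc wc xd wd by blast+
  note dd = this
  have cl29: "\<not> (E b c \<and> E c d \<and> E d xd \<and> E xd b \<and> \<not> E b d \<and> \<not> E c xd)" using C4_of[OF G n4 mem(2) mem(3) mem(4) mem(12) dd] by blast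
  have cl30: "\<not> (E a wa \<and> E wa wc \<and> E wc d \<and> E d xd \<and> E xd xa \<and> E xa a \<and> \<not> E a wc \<and> \<not> E a d \<and> \<not> E a xd \<and> \<not> E wa d \<and> \<not> E wa xd \<and> \<not> E wa xa \<and> \<not> E wc xd \<and> \<not> E wc xa \<and> \<not> E d xa)" using C6_of[OF G n6 mem(1) mem(5) mem(9) mem(4) mem(12) mem(6)] by blast
  have "a \<noteq> c" "b \<noteq> xd" using PX PW pd XWd xa wa xb wb xc wc xd wd by blast+
  note dd = this
  have cl31: "\<not> (E a b \<and> E b c \<and> E c xd \<and> E xd a \<and> \<not> E a c \<and> \<not> E b xd)" using C4_of[OF G n4 mem(1) mem(2) mem(3) mem(12) dd] by blast
  have "b \<noteq> d" "wc \<noteq> xd" using PX PW pd XWd xa wa xb wb xc wc xd wd by blast+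
  note dd = this
  have cl32: "\<not> (E b wc \<and> E wc d \<and> E d xd \<and> E xd b \<and> \<not> E b d \<and> \<not> E wc xd)" using C4_of[OF G n4 mem(2) mem(9) mem(4) mem(12) dd] by blast
  have "c \<noteq> xd" "d \<noteq> xc" using PX PW pd XWd xa wa xb wb xc wc xd wd by blast+
  note dd = this
  have cl33: "\<not> (E c d \<and> E d xd \<and> E xd xc \<and> E xc c \<and> \<not> E c xd \<and> \<not> E d xc)" using C4_of[OF G n4 mem(3) mem(4) mem(12) mem(10) dd] by blast
  have "a \<noteq> c" "wc \<noteq> xc" using PX PW pd XWd xa wa xb wb xc wc xd wd by blast+
  note dd = this
  have cl34: "\<not> (E a wc \<and> E wc c \<and> E c xc \<and> E xc a \<and> \<not> E a c \<and> \<not> E wc xc)" using C4_of[OF G n4 mem(1) mem(9) mem(3) mem(10) dd] by blast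
  have "b \<noteq> d" "wd \<noteq> xd" using PX PW pd XWd xa wa xb wb xc wc xd wd by blast+
  note dd = this
  have cl35: "\<not> (E b wd \<and> E wd d \<and> E d xd \<and> E xd b \<and> \<not> E b d \<and> \<not> E wd xd)" using C4_of[OF G n4 mem(2) mem(11) mem(4) mem(12) dd] by blast
  have cl36: "\<not> (E a wa \<and> E wa wc \<and> E wc c \<and> E c xd \<and> E xd xa \<and> E xa a \<and> \<not> E a wc \<and> \<not> E a c \<and> \<not> E a xd \<and> \<not> E wa c \<and> \<not> E wa xd \<and> \<not> E wa xa \<and> \<not> E wc xd \<and> \<not> E wc xa \<and> \<not> E c xa)" using C6_of[OF G n6 mem(1) mem(5) mem(9) mem(3) mem(12) mem(6)] by blast
  have cl37: "\<not> (E a wa \<and> E wa wd \<and> E wd d \<and> E d xd \<and> E xd xa \<and> E xa a \<and> \<not> E a wd \<and> \<not> E a d \<and> \<not> E a xd \<and> \<not> E wa d \<and> \<not> E wa xd \<and> \<not> E wa xa \<and> \<not> E wd xd \<and> \<not> E wd xa \<and> \<not> E d xa)" using C6_of[OF G n6 mem(1) mem(5) mem(11) mem(4) mem(12) mem(6)] by blast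
  have "b \<noteq> xd" "c \<noteq> xa" using PX PW pd XWd xa wa xb wb xc wc xd wd by blast+
  note dd = this
  have cl38: "\<not> (E b c \<and> E c xd \<and> E xd xa \<and> E xa b \<and> \<not> E b xd \<and> \<not> E c xa)" using C4_of[OF G n4 mem(2) mem(3) mem(12) mem(6) dd] by blast
  have "b \<noteq> wd" "c \<noteq> wb" using PX PW pd XWd xa wa xb wb xc wc xd wd by blast+
  note dd = this
  have cl39: "\<not> (E b c \<and> E c wd \<and> E wd wb \<and> E wb b \<and> \<not> E b wd \<and> \<not> E c wb)" using C4_of[OF G n4 mem(2) mem(3) mem(11) mem(7) dd] by blast
  have "b \<noteq> d" "wa \<noteq> xd" using PX PW pd XWd xa wa xb wb xc wc xd wd by blast+
  note dd = this
  have cl40: "\<not> (E b wa \<and> E wa d \<and> E d xd \<and> E xd b \<and> \<not> E b d \<and> \<not> E wa xd)" using C4_of[OF G n4 mem(2) mem(5) mem(4) mem(12) dd] by blast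
  have "a \<noteq> c" "b \<noteq> wc" using PX PW pd XWd xa wa xb wb xc wc xd wd by blast+
  note dd = this
  have cl41: "\<not> (E a b \<and> E b c \<and> E c wc \<and> E wc a \<and> \<not> E a c \<and> \<not> E b wc)" using C4_of[OF G n4 mem(1) mem(2) mem(3) mem(9) dd] by blast
  have "a \<noteq> xc" "b \<noteq> xd" using PX PW pd XWd xa wa xb wb xc wc xd wd by blast+
  note dd = this
  have cl42: "\<not> (E a b \<and> E b xc \<and> E xc xd \<and> E xd a \<and> \<not> E a xc \<and> \<not> E b xd)" using C4_of[OF G n4 mem(1) mem(2) mem(10) mem(12) dd] by blast
  have "a \<noteq> c" "b \<noteq> wa" using PX PW pd XWd xa wa xb wb xc wc xd wd by blast+
  note dd = this
  have cl43: "\<not> (E a b \<and> E b c \<and> E c wa \<and> E wa a \<and> \<not> E a c \<and> \<not> E b wa)" using C4_of[OF G n4 mem(1) mem(2) mem(3) mem(5) dd] by blast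
  have cl44: "\<not> (E a wa \<and> E wa wc \<and> E wc c \<and> E c xc \<and> E xc xd \<and> E xd a \<and> \<not> E a wc \<and> \<not> E a c \<and> \<not> E a xc \<and> \<not> E wa c \<and> \<not> E wa xc \<and> \<not> E wa xd \<and> \<not> E wc xc \<and> \<not> E wc xd \<and> \<not> E c xd)" using C6_of[OF G n6 mem(1) mem(5) mem(9) mem(3) mem(10) mem(12)] by blast
  have cl45: "\<not> (E a b \<and> E b c \<and> E c d \<and> E d wd \<and> E wd wa \<and> E wa a \<and> \<not> E a c \<and> \<not> E a d \<and> \<not> E a wd \<and> \<not> E b d \<and> \<not> E b wd \<and> \<not> E b wa \<and> \<not> E c wd \<and> \<not> E c wa \<and> \<not> E d wa)" using C6_of[OF G n6 mem(1) mem(2) mem(3) mem(4) mem(11) mem(5)] by blast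
  have "a \<noteq> c" "wb \<noteq> xc" using PX PW pd XWd xa wa xb wb xc wc xd wd by blast+
  note dd = this
  have cl46: "\<not> (E a wb \<and> E wb c \<and> E c xc \<and> E xc a \<and> \<not> E a c \<and> \<not> E wb xc)" using C4_of[OF G n4 mem(1) mem(7) mem(3) mem(10) dd] by blast
  have "a \<noteq> d" "wd \<noteq> xd" using PX PW pd XWd xa wa xb wb xc wc xd wd by blast+
  note dd = this
  have cl47: "\<not> (E a wd \<and> E wd d \<and> E d xd \<and> E xd a \<and> \<not> E a d \<and> \<not> E wd xd)" using C4_of[OF G n4 mem(1) mem(11) mem(4) mem(12) dd] by blast
  have cl48: "\<not> (E a wa \<and> E wa wd \<and> E wd c \<and> E c xc \<and> E xc xa \<and> E xa a \<and> \<not> E a wd \<and> \<not> E a c \<and> \<not> E a xc \<and> \<not> E wa c \<and> \<not> E wa xc \<and> \<not> E wa xa \<and> \<not> E wd xc \<and> \<not> E wd xa \<and> \<not> E c xa)" using C6_of[OF G n6 mem(1) mem(5) mem(11) mem(3) mem(10) mem(6)] by blast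
  have "a \<noteq> d" "wa \<noteq> xd" using PX PW pd XWd xa wa xb wb xc wc xd wd by blast+
  note dd = this
  have cl49: "\<not> (E a wa \<and> E wa d \<and> E d xd \<and> E xd a \<and> \<not> E a d \<and> \<not> E wa xd)" using C4_of[OF G n4 mem(1) mem(5) mem(4) mem(12) dd] by blast
  have "a \<noteq> wd" "b \<noteq> wa" using PX PW pd XWd xa wa xb wb xc wc xd wd by blast+
  note dd = this
  have cl50: "\<not> (E a b \<and> E b wd \<and> E wd wa \<and> E wa a \<and> \<not> E a wd \<and> \<not> E b wa)" using C4_of[OF G n4 mem(1) mem(2) mem(11) mem(5) dd] by blast
  have "a \<noteq> d" "xa \<noteq> wd" using PX PW pd XWd xa wa xb wb xc wc xd wd by blast+
  note dd = this
  have cl51: "\<not> (E a xa \<and> E xa d \<and> E d wd \<and> E wd a \<and> \<not> E a d \<and> \<not> E xa wd)" using C4_of[OF G n4 mem(1) mem(6) mem(4) mem(11) dd] by blast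
  have cl52: "\<not> (E a xa \<and> E xa xd \<and> E xd d \<and> E d wc \<and> E wc wb \<and> E wb a \<and> \<not> E a xd \<and> \<not> E a d \<and> \<not> E a wc \<and> \<not> E xa d \<and> \<not> E xa wc \<and> \<not> E xa wb \<and> \<not> E xd wc \<and> \<not> E xd wb \<and> \<not> E d wb)" using C6_of[OF G n6 mem(1) mem(6) mem(12) mem(4) mem(9) mem(7)] by blast
  have syms: "E a b \<longleftrightarrow> E b a" "E a c \<longleftrightarrow> E c a" "E a d \<longleftrightarrow> E d a" "E a wa \<longleftrightarrow> E wa a" "E a xa \<longleftrightarrow> E xa a" "E a wb \<longleftrightarrow> E wb a" "E a xb \<longleftrightarrow> E xb a" "E a wc \<longleftrightarrow> E wc a" "E a xc \<longleftrightarrow> E xc a" "E a wd \<longleftrightarrow> E wd a" "E a xd \<longleftrightarrow> E xd a" "E b c \<longleftrightarrow> E c b" "E b d \<longleftrightarrow> E d b" "E b wa \<longleftrightarrow> E wa b" "E b xa \<longleftrightarrow> E xa b" "E b wb \<longleftrightarrow> E wb b" "E b xb \<longleftrightarrow> E xb b" "E b wc \<longleftrightarrow> E wc b" "E b xc \<longleftrightarrow> E xc b" "E b wd \<longleftrightarrow> E wd b" "E b xd \<longleftrightarrow> E xd b" "E c d \<longleftrightarrow> E d c" "E c wa \<longleftrightarrow> E wa c" "E c xa \<longleftrightarrow> E xa c" "E c wb \<longleftrightarrow> E wb c" "E c xb \<longleftrightarrow> E xb c" "E c wc \<longleftrightarrow> E wc c" "E c xc \<longleftrightarrow> E xc c"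 "E c wd \<longleftrightarrow> E wd c" "E c xd \<longleftrightarrow> E xd c" "E d wa \<longleftrightarrow> E wa d" "E d xa \<longleftrightarrow> E xa d" "E d wb \<longleftrightarrow> E wb d" "E d xb \<longleftrightarrow> E xb d" "E d wc \<longleftrightarrow> E wc d" "E d xc \<longleftrightarrow> E xc d" "E d wd \<longleftrightarrow> E wd d" "E d xd \<longleftrightarrow> E xd d" "E wa xa \<longleftrightarrow> E xa wa" "E wa wb \<longleftrightarrow> E wb wa" "E wa xb \<longleftrightarrow> E xb wa" "E wa wc \<longleftrightarrow> E wc wa" "E wa xc \<longleftrightarrow> E xc wa" "E wa wd \<longleftrightarrow> E wd wa" "E wa xd \<longleftrightarrow> E xd wa" "E xa wb \<longleftrightarrow> E wb xa" "E xa xb \<longleftrightarrow> E xb xa" "E xa wc \<longleftrightarrow> E wc xa" "E xa xc \<longleftrightarrow> E xc xa" "E xa wd \<longleftrightarrow> E wd xa" "E xa xd \<longleftrightarrow> E xd xa" "E wb xb \<longleftrightarrow> E xb wb" "E wb wc \<longleftrightarrow> E wc wb" "E wb xc \<longleftrightarrow> E xc wb" "E wb wd \<longleftrightarrow> E wd wb" "E wb xd \<longleftrightarrow> E xd wb" "E xb wc \<longleftrightarrow> E wc xb" "E xb xc \<longleftrightarrow> E xc xb" "E xb wd \<longleftrightarrow> E wd xb" "E xb xd \<longleftrightarrow> E xd xb" "E wc xc \<longleftrightarrow> E xc wc" "E wc wd \<longleftrightarrow> E wd wc" "E wc xd \<longleftrightarrow> E xd wc" "E xc wd \<longleftrightarrow>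 E wd xc" "E xc xd \<longleftrightarrow> E xd xc" "E wd xd \<longleftrightarrow> E xd wd" using sy by blast+
  have xw: "\<not> E xa wa" "\<not> E xa wb" "\<not> E xa wc" "\<not> E xa wd" "\<not> E xb wa" "\<not> E xb wb" "\<not> E xb wc" "\<not> E xb wd" "\<not> E xc wa" "\<not> E xc wb" "\<not> E xc wc" "\<not> E xc wd" "\<not> E xd wa" "\<not> E xd wb" "\<not> E xd wc" "\<not> E xd wd" using XW xa wa xb wb xc wc xd wd by blast+
  have cq: "xa = xb \<or> E xa xb" "xa = xc \<or> E xa xc" "xa = xd \<or> E xa xd" "xb = xc \<or> E xb xc" "xb = xd \<or> E xb xd" "xc = xd \<or> E xc xd" "wa = wb \<or> E wa wb" "wa = wc \<or> E wa wc" "wa = wd \<or> E wa wd" "wb = wc \<or> E wb wc" "wb = wd \<or> E wb wd" "wc = wd \<or> E wc wd" using cX cW xa wa xb wb xc wc xd wd by blast+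
  have tw: "xa = xb \<longrightarrow> (E xa a \<longleftrightarrow> E xb a)" "xa = xb \<longrightarrow> (E xa b \<longleftrightarrow> E xb b)" "xa = xb \<longrightarrow> (E xa c \<longleftrightarrow> E xb c)" "xa = xb \<longrightarrow> (E xa d \<longleftrightarrow> E xb d)" "xa = xb \<longrightarrow> (E xa wa \<longleftrightarrow> E xb wa)" "xa = xb \<longrightarrow> (E xa wb \<longleftrightarrow> E xb wb)" "xa = xb \<longrightarrow> (E xa wc \<longleftrightarrow> E xb wc)" "xa = xb \<longrightarrow> (E xa xc \<longleftrightarrow> E xb xc)" "xa = xb \<longrightarrow> (E xa wd \<longleftrightarrow> E xb wd)" "xa = xb \<longrightarrow> (E xa xd \<longleftrightarrow> E xb xd)" "xa = xc \<longrightarrow> (E xa a \<longleftrightarrow> E xc a)" "xa = xc \<longrightarrow> (E xa b \<longleftrightarrow> E xc b)" "xa = xc \<longrightarrow> (E xa c \<longleftrightarrow> E xc c)" "xa = xc \<longrightarrow> (E xa d \<longleftrightarrow> E xc d)" "xa = xc \<longrightarrow> (E xa wa \<longleftrightarrow> E xc wa)" "xa = xc \<longrightarrow> (E xa wb \<longleftrightarrow> E xc wb)" "xa = xc \<longrightarrow> (E xa xb \<longleftrightarrow> E xc xb)" "xa = xc \<longrightarrow> (E xa wc \<longleftrightarrow> E xc wc)" "xa = xc \<longrightarrow> (E xa wd \<longleftrightarrow> E xc wd)" "xa = xc \<longrightarrow> (E xa xd \<longleftrightarrow> E xc xd)" "xa = xd \<longrightarrow> (E xa a \<longleftrightarrow>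 E xd a)" "xa = xd \<longrightarrow> (E xa b \<longleftrightarrow> E xd b)" "xa = xd \<longrightarrow> (E xa c \<longleftrightarrow> E xd c)" "xa = xd \<longrightarrow> (E xa d \<longleftrightarrow> E xd d)" "xa = xd \<longrightarrow> (E xa wa \<longleftrightarrow> E xd wa)" "xa = xd \<longrightarrow> (E xa wb \<longleftrightarrow> E xd wb)" "xa = xd \<longrightarrow> (E xa xb \<longleftrightarrow> E xd xb)" "xa = xd \<longrightarrow> (E xa wc \<longleftrightarrow> E xd wc)" "xa = xd \<longrightarrow> (E xa xc \<longleftrightarrow> E xd xc)" "xa = xd \<longrightarrow> (E xa wd \<longleftrightarrow> E xd wd)" "xb = xc \<longrightarrow> (E xb a \<longleftrightarrow> E xc a)" "xb = xc \<longrightarrow> (E xb b \<longleftrightarrow> E xc b)" "xb = xc \<longrightarrow> (E xb c \<longleftrightarrow> E xc c)" "xb = xc \<longrightarrow> (E xb d \<longleftrightarrow> E xc d)" "xb = xc \<longrightarrow> (E xb wa \<longleftrightarrow> E xc wa)" "xb = xc \<longrightarrow> (E xb xa \<longleftrightarrow> E xc xa)" "xb = xc \<longrightarrow> (E xb wb \<longleftrightarrow> E xc wb)" "xb = xc \<longrightarrow> (E xb wc \<longleftrightarrow> E xc wc)" "xb = xc \<longrightarrow> (E xb wd \<longleftrightarrow> E xc wd)" "xb = xc \<longrightarrow> (E xb xd \<longleftrightarrow> E xc xd)" "xb = xd \<longrightarrow> (E xb a \<longleftrightarrow> E xd a)" "xb = xd \<longrightarrow> (E xb b \<longleftrightarrow>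 E xd b)" "xb = xd \<longrightarrow> (E xb c \<longleftrightarrow> E xd c)" "xb = xd \<longrightarrow> (E xb d \<longleftrightarrow> E xd d)" "xb = xd \<longrightarrow> (E xb wa \<longleftrightarrow> E xd wa)" "xb = xd \<longrightarrow> (E xb xa \<longleftrightarrow> E xd xa)" "xb = xd \<longrightarrow> (E xb wb \<longleftrightarrow> E xd wb)" "xb = xd \<longrightarrow> (E xb wc \<longleftrightarrow> E xd wc)" "xb = xd \<longrightarrow> (E xb xc \<longleftrightarrow> E xd xc)" "xb = xd \<longrightarrow> (E xb wd \<longleftrightarrow> E xd wd)" "xc = xd \<longrightarrow> (E xc a \<longleftrightarrow> E xd a)" "xc = xd \<longrightarrow> (E xc b \<longleftrightarrow> E xd b)" "xc = xd \<longrightarrow> (E xc c \<longleftrightarrow> E xd c)" "xc = xd \<longrightarrow> (E xc d \<longleftrightarrow> E xd d)" "xc = xd \<longrightarrow> (E xc wa \<longleftrightarrow> E xd wa)" "xc = xd \<longrightarrow> (E xc xa \<longleftrightarrow> E xd xa)" "xc = xd \<longrightarrow> (E xc wb \<longleftrightarrow> E xd wb)" "xc = xd \<longrightarrow> (E xc xb \<longleftrightarrow> E xd xb)" "xc = xd \<longrightarrow> (E xc wc \<longleftrightarrow> E xd wc)" "xc = xd \<longrightarrow> (E xc wd \<longleftrightarrow> E xd wd)" "wa = wb \<longrightarrow> (E wa a \<longleftrightarrow> E wb a)" "wa = wb \<longrightarrow> (E wa b \<longleftrightarrow> E wb b)" "wa = wb \<longrightarrow> (E wa c \<longleftrightarrow>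 E wb c)" "wa = wb \<longrightarrow> (E wa d \<longleftrightarrow> E wb d)" "wa = wb \<longrightarrow> (E wa xa \<longleftrightarrow> E wb xa)" "wa = wb \<longrightarrow> (E wa xb \<longleftrightarrow> E wb xb)" "wa = wb \<longrightarrow> (E wa wc \<longleftrightarrow> E wb wc)" "wa = wb \<longrightarrow> (E wa xc \<longleftrightarrow> E wb xc)" "wa = wb \<longrightarrow> (E wa wd \<longleftrightarrow> E wb wd)" "wa = wb \<longrightarrow> (E wa xd \<longleftrightarrow> E wb xd)" "wa = wc \<longrightarrow> (E wa a \<longleftrightarrow> E wc a)" "wa = wc \<longrightarrow> (E wa b \<longleftrightarrow> E wc b)" "wa = wc \<longrightarrow> (E wa c \<longleftrightarrow> E wc c)" "wa = wc \<longrightarrow> (E wa d \<longleftrightarrow> E wc d)" "wa = wc \<longrightarrow> (E wa xa \<longleftrightarrow> E wc xa)" "wa = wc \<longrightarrow> (E wa wb \<longleftrightarrow> E wc wb)" "wa = wc \<longrightarrow> (E wa xb \<longleftrightarrow> E wc xb)" "wa = wc \<longrightarrow> (E wa xc \<longleftrightarrow> E wc xc)" "wa = wc \<longrightarrow> (E wa wd \<longleftrightarrow> E wc wd)" "wa = wc \<longrightarrow> (E wa xd \<longleftrightarrow> E wc xd)" "wa = wd \<longrightarrow> (E wa a \<longleftrightarrow> E wd a)" "wa = wd \<longrightarrow> (E wa b \<longleftrightarrow> E wd b)" "wa = wd \<longrightarrow> (E wa c \<longleftrightarrow> E wd c)" "wa = wd \<longrightarrow> (E wa d \<longleftrightarrow>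 E wd d)" "wa = wd \<longrightarrow> (E wa xa \<longleftrightarrow> E wd xa)" "wa = wd \<longrightarrow> (E wa wb \<longleftrightarrow> E wd wb)" "wa = wd \<longrightarrow> (E wa xb \<longleftrightarrow> E wd xb)" "wa = wd \<longrightarrow> (E wa wc \<longleftrightarrow> E wd wc)" "wa = wd \<longrightarrow> (E wa xc \<longleftrightarrow> E wd xc)" "wa = wd \<longrightarrow> (E wa xd \<longleftrightarrow> E wd xd)" "wb = wc \<longrightarrow> (E wb a \<longleftrightarrow> E wc a)" "wb = wc \<longrightarrow> (E wb b \<longleftrightarrow> E wc b)" "wb = wc \<longrightarrow> (E wb c \<longleftrightarrow> E wc c)" "wb = wc \<longrightarrow> (E wb d \<longleftrightarrow> E wc d)" "wb = wc \<longrightarrow> (E wb wa \<longleftrightarrow> E wc wa)" "wb = wc \<longrightarrow> (E wb xa \<longleftrightarrow> E wc xa)" "wb = wc \<longrightarrow> (E wb xb \<longleftrightarrow> E wc xb)" "wb = wc \<longrightarrow> (E wb xc \<longleftrightarrow> E wc xc)" "wb = wc \<longrightarrow> (E wb wd \<longleftrightarrow> E wc wd)" "wb = wc \<longrightarrow> (E wb xd \<longleftrightarrow> E wc xd)" "wb = wd \<longrightarrow> (E wb a \<longleftrightarrow> E wd a)" "wb = wd \<longrightarrow> (E wb b \<longleftrightarrow> E wd b)" "wb = wd \<longrightarrow> (E wb c \<longleftrightarrow> E wd c)" "wb = wd \<longrightarrow> (E wb d \<longleftrightarrow> E wd d)" "wb = wd \<longrightarrow> (E wb wa \<longleftrightarrow>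 E wd wa)" "wb = wd \<longrightarrow> (E wb xa \<longleftrightarrow> E wd xa)" "wb = wd \<longrightarrow> (E wb xb \<longleftrightarrow> E wd xb)" "wb = wd \<longrightarrow> (E wb wc \<longleftrightarrow> E wd wc)" "wb = wd \<longrightarrow> (E wb xc \<longleftrightarrow> E wd xc)" "wb = wd \<longrightarrow> (E wb xd \<longleftrightarrow> E wd xd)" "wc = wd \<longrightarrow> (E wc a \<longleftrightarrow> E wd a)" "wc = wd \<longrightarrow> (E wc b \<longleftrightarrow> E wd b)" "wc = wd \<longrightarrow> (E wc c \<longleftrightarrow> E wd c)" "wc = wd \<longrightarrow> (E wc d \<longleftrightarrow> E wd d)" "wc = wd \<longrightarrow> (E wc wa \<longleftrightarrow> E wd wa)" "wc = wd \<longrightarrow> (E wc xa \<longleftrightarrow> E wd xa)" "wc = wd \<longrightarrow> (E wc wb \<longleftrightarrow> E wd wb)" "wc = wd \<longrightarrow> (E wc xb \<longleftrightarrow> E wd xb)" "wc = wd \<longrightarrow> (E wc xc \<longleftrightarrow> E wd xc)" "wc = wd \<longrightarrow> (E wc xd \<longleftrightarrow> E wd xd)" by simp_all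
  have req: "E a xa" "E a wa" "E b xb" "E b wb" "E c xc" "E c wc" "E d xd" "E d wd" using xa wa xb wb xc wc xd wd by blast+
  show False using pe req xw cq tw syms cl0 cl1 cl2 cl3 cl4 cl5 cl6 cl7 cl8 cl9 cl10 cl11 cl12 cl13 cl14 cl15 cl16 cl17 cl18 cl19 cl20 cl21 cl22 cl23 cl24 cl25 cl26 cl27 cl28 cl29 cl30 cl31 cl32 cl33 cl34 cl35 cl36 cl37 cl38 cl39 cl40 cl41 cl42 cl43 cl44 cl45 cl46 cl47 cl48 cl49 cl50 cl51 cl52 by sat
qed
lemma A3_props:
  assumes "v \<in> A3 V E B i"
  shows "v \<in> V" "v \<notin> B ((i+1) mod 5)" "v \<notin> B ((i+4) mod 5)"
    "\<exists>u\<in>B ((i+1) mod 5). E v u" "\<exists>u\<in>B ((i+4) mod 5). E v u"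
proof -
  have v: "v \<in> V" "v \<notin> blowup_vertices B" "supp E B v = {(i + 4) mod 5, i, (i + 1) mod 5}"
    using assms unfolding A3_def by auto
  show "v \<in> V" using v(1) .
  show "v \<notin> B ((i+1) mod 5)" using v(2) unfolding blowup_vertices_def by auto
  show "v \<notin> B ((i+4) mod 5)" using v(2) unfolding blowup_vertices_def by auto
  have "(i+1) mod 5 \<in> supp E B v" "(i+4) mod 5 \<in> supp E B v" using v(3) by auto
  then show "\<exists>u\<in>B ((i+1) mod 5). E v u" "\<exists>u\<in>B ((i+4) mod 5). E v u"
    unfolding supp_def by auto
qed

theorem lemma8p5:
  fixes V :: "'a set" and E :: "'a \<Rightarrow> 'a \<Rightarrow> bool" and B :: "nat \<Rightarrow> 'a set"
  assumes "simple_graph V E"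
    and "\<not> has_induced_path V E 7"
    and "\<not> has_induced_cycle V E 4"
    and "\<not> has_induced_cycle V E 6"
    and "\<not> has_induced_cycle V E 7"
    and "nice_blowup_C5 V E B"
    and "i < 5"
  shows "\<not> has_induced_path (A3 V E B i) E 4"
proof
  assume "has_induced_path (A3 V E B i) E 4"
  then obtain f where inj: "inj_on f {..<4}" and img: "f ` {..<4} \<subseteq> A3 V E B i"
    and adj: "\<forall>i<4. \<forall>j<4. E (f i) (f j) \<longleftrightarrow> (i = Suc j \<or> j = Suc i)"
    unfolding has_induced_path_def by blast
  define X where "X = B ((i+1) mod 5)"
  define W where "W = B ((i+4) mod 5)"
  have nb: "\<forall>j<5. B j \<subseteq> V" "\<forall>j<5. \<forall>k<5. j \<noteq> k \<longrightarrow> B j \<inter> B k = {}"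
     "\<forall>j<5. \<forall>x\<in>B j. \<forall>y\<in>B j. x \<noteq> y \<longrightarrow> E x y"
     "\<forall>j<5. \<forall>x\<in>B j. \<forall>y\<in>B ((j + 2) mod 5). \<not> E x y"
    using assms(6) unfolding nice_blowup_C5_def by blast+
  have sy: "\<And>x y. E x y \<Longrightarrow> E y x" using assms(1) unfolding simple_graph_def by blast
  have i1: "(i+1) mod 5 < 5" "(i+4) mod 5 < 5" by simp_all
  have i2: "((i+4) mod 5 + 2) mod 5 = (i+1) mod 5" by presburger
  have i3: "(i+1) mod 5 \<noteq> (i+4) mod 5" by presburger
  have XV: "X \<subseteq> V" "W \<subseteq> V" using nb(1) i1 unfolding X_def W_def by blast+
  have cX: "\<forall>x\<in>X. \<forall>y\<in>X. x \<noteq> y \<longrightarrow> E x y" "\<forall>x\<in>W. \<forall>y\<in>W. x \<noteq> y \<longrightarrow> E x y"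
    using nb(3) i1 unfolding X_def W_def by blast+
  have WX: "\<forall>x\<in>W. \<forall>y\<in>X. \<not> E x y" using nb(4) i1(2) i2 unfolding X_def W_def by metis
  have XW: "\<forall>x\<in>X. \<forall>y\<in>W. \<not> E x y" using WX sy by blast
  have XWd: "X \<inter> W = {}" using nb(2) i1 i3 unfolding X_def W_def by blast
  have inA: "f 0 \<in> A3 V E B i" "f 1 \<in> A3 V E B i" "f 2 \<in> A3 V E B i" "f 3 \<in> A3 V E B i"
    using img by auto
  note P0 = A3_props[OF inA(1), folded X_def W_def]
  note P1 = A3_props[OF inA(2), folded X_def W_def]
  note P2 = A3_props[OF inA(3), folded X_def W_def]
  note P3 = A3_props[OF inA(4), folded X_def W_def]
  have pd: "f 0 \<noteq> f 1" "f 0 \<noteq> f 2" "f 0 \<noteq> f 3" "f 1 \<noteq> f 2" "f 1 \<noteq> f 3" "f 2 \<noteq> f 3"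
    using inj_on_contraD[OF inj] by simp_all
  have pe: "E (f 0) (f 1)" "E (f 1) (f 2)" "E (f 2) (f 3)" "\<not> E (f 0) (f 2)" "\<not> E (f 0) (f 3)" "\<not> E (f 1) (f 3)"
    using adj by simp_all
  show False
    by (rule core[OF assms(1) assms(3) assms(4) XV cX XW XWd P0(1) P1(1) P2(1) P3(1)
        P0(2) P1(2) P2(2) P3(2) P0(3) P1(3) P2(3) P3(3) pd pe P0(4) P1(4) P2(4) P3(4)
        P0(5) P1(5) P2(5) P3(5)])
qed
end
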